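(* Let $s_0,\dots,s_m\in\Sigma^n$ be strings such that $s_{i+1}=ICR(s_i)$ for all $0\le i<m$. Then \[P(H(s_0)) - P(H(s_m)) \equiv \sum_{i=0}^{m-1} e_{s_i[0]} \mod K.\]
   Context: Let $k\ge 1$ be an integer, $\Sigma=\{0,1,\dots,k-1\}$ with arithmetic on symbols taken modulo $k$, and $n\ge 1$. For $s\in\Sigma^n$ write $s=s[0]s[1]\cdots s[n-1]$. The histogram of a string $s$ is $H(s):\Sigma\to\mathbb{Z}$, $H(s)(c)=$ number of occurrences of $c$ in $s$. For $b\in\Sigma$, $e_b:\Sigma\to\mathbb{Z}$ is the indicator function of $b$. $K:\Sigma\to\mathbb{Z}$ is the constant function $1$. For $H:\Sigma\to\mathbb{Z}$, its partial sum is $P(H):\Sigma\to\mathbb{Z}$, $P(H)(i)=\sum_{j=0}^{i}H(j)$. For $F,G:\Sigma\to\mathbb{Z}$, $F\equiv G \mod K$ means $F-G$ is an integer multiple of $K$. The incremented cycle register rule is $ICR(s)=s[1]s[2]\cdots s[n-1](s[0]+1)$. *)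

theory Defs
  imports Main
begin

text \<open>Alphabet Sigma = {0..<k} (as naturals), strings = lists over Sigma.
  Functions Sigma -> Z are represented as nat => int, only values on {0..<k} matter.\<close>

definition hist :: "nat list \<Rightarrow> nat \<Rightarrow> int" where
  "hist s c = int (count_list s c)"

definition ind :: "nat \<Rightarrow> nat \<Rightarrow> int" where
  "ind b c = (if c = b then 1 else 0)"

definition psum :: "(nat \<Rightarrow> int) \<Rightarrow> nat \<Rightarrow> int" where
  "psum H i = (\<Sum>j\<le>i. H j)"

text \<open>F == G mod K on Sigma: F - G is an integer multiple of the constant function 1.\<close>
definition congK :: "nat \<Rightarrow> (nat \<Rightarrow> int) \<Rightarrow> (nat \<Rightarrow> int) \<Rightarrow> bool" where
  "congK k F G = (\<exists>c::int. \<forall>i<k. F i - G i = c)"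

definition ICR :: "nat \<Rightarrow> nat list \<Rightarrow> nat list" where
  "ICR k s = tl s @ [(hd s + 1) mod k]"

end

theory Submission
  imports Defs
begin

lemma psum_ind: "psum (ind a) c = (if a \<le> c then 1 else 0)"
  unfolding psum_def ind_def by (simp add: sum.delta)

lemma step:
  assumes "s \<noteq> []" "set s \<subseteq> {..<k}"
  shows "\<exists>d. \<forall>c<k. psum (hist s) c - psum (hist (ICR k s)) c - ind (s!0) c = d"
proof -
  obtain a t where st: "s = a # t" using assms(1) by (cases s) auto
  have ak: "a < k" using assms(2) st by auto
  define b where "b = (a + 1) mod k"
  have h: "hist (ICR k s) j = hist s j - ind a j + ind b j" for j
    unfolding hist_def ICR_def ind_def b_def st by auto
  have p: "psum (hist s) c - psum (hist (ICR k s)) c = psum (ind a) c - psum (ind b) c" for c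
    unfolding psum_def h by (simp add: sum_subtractf sum.distrib)
  have s0: "s ! 0 = a" using st by simp
  show ?thesis
  proof (cases "a + 1 < k")
    case True
    then have "b = a + 1" unfolding b_def by simp
    then show ?thesis by (intro exI[of _ 0]) (auto simp: p psum_ind s0 ind_def)
  next
    case False
    then have "a + 1 = k" using ak by simp
    then have "b = 0" unfolding b_def by simp
    then show ?thesis using \<open>a + 1 = k\<close>
      by (intro exI[of _ "-1"]) (auto simp: p psum_ind s0 ind_def)
  qed
qed

lemma main:
  assumes "\<forall>i\<le>m. length (s i) = n \<and> set (s i) \<subseteq> {..<k}" "n \<ge> 1"
    and "\<forall>i<m. s (Suc i) = ICR k (s i)"
  shows "\<exists>d. \<forall>c<k. psum (hist (s 0)) c - psum (hist (s m)) c - (\<Sum>i<m. ind (s i ! 0) c) = d"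
  using assms
proof (induction m)
  case 0
  then show ?case by auto
next
  case (Suc m)
  then obtain d where d: "\<forall>c<k. psum (hist (s 0)) c - psum (hist (s m)) c - (\<Sum>i<m. ind (s i ! 0) c) = d"
    by auto
  have "s m \<noteq> []" "set (s m) \<subseteq> {..<k}" using Suc.prems by (auto dest!: spec[of _ m])
  then obtain e where e: "\<forall>c<k. psum (hist (s m)) c - psum (hist (ICR k (s m))) c - ind (s m ! 0) c = e"
    using step by blast
  have "s (Suc m) = ICR k (s m)" using Suc.prems by auto
  then show ?case using d e by (intro exI[of _ "d + e"]) (auto simp: algebra_simps)
qed

theorem lemma2:
  fixes k n m :: nat and s :: "nat \<Rightarrow> nat list"
  assumes "k \<ge> 1" and "n \<ge> 1"
    and "\<forall>i\<le>m. length (s i) = n \<and> set (s i) \<subseteq> {..<k}"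
    and "\<forall>i<m. s (Suc i) = ICR k (s i)"
  shows "congK k (\<lambda>c. psum (hist (s 0)) c - psum (hist (s m)) c)
                 (\<lambda>c. \<Sum>i<m. ind (s i ! 0) c)"
  using main[OF assms(3,2,4)] unfolding congK_def by simp

end
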